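(* Let $\mathcal{G}=(\mathcal{V},\mathcal{E})$ be a directed graph with $n$ nodes, $m$ edges and terminals $s,t$, let $f:2^{\mathcal{E}}\to\mathbb{R}_+$ be normalized, monotone nondecreasing and submodular with Lovász extension $\tilde f$, and let $C^*$ be an $(s,t)$-cut minimizing $f$. Let $(x^*,y^* )$ be an optimal solution of the relaxation $$\min_{y\in\mathbb{R}^{\mathcal{E}},x\in\mathbb{R}^{\mathcal{V}}}\tilde f(y)\ \text{ s.t. } -x(u)+x(v)+y(e)\ge 0\ \forall e=(u,v)\in\mathcal{E},\ x(s)-x(t)\ge1,\ y\ge0,$$ with $x^*\in[0,1]^n$, $y^*\in[0,1]^m$. For $\theta$ drawn uniformly at random from $[0,1]$, let $\mathcal{V}_\theta=\{u\in\mathcal{V}: x^*(u)\ge\theta\}$ and let $C_\theta$ be the cut consisting of the edges leaving $\mathcal{V}_\theta$. Then $\mathbb{E}_\theta[f(C_\theta)]\le (n-1)\tilde f(y^* )\le (n-1)f(C^* )$.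
   Context: An $(s,t)$-cut is a set of edges whose removal disconnects all $s$-$t$ paths. The Lovász extension: for $x\in[0,1]^m$ written uniquely as $x=\sum_j\lambda_j\chi_{B_j}$ with $\lambda_j>0$ and nested level sets $B_1\subset B_2\subset\cdots$, $\tilde f(x)=\sum_j\lambda_j f(B_j)$, where $\chi_B$ is the indicator vector of $B$. *)

theory Defs
  imports "HOL-Analysis.Analysis"
begin

definition st_cut :: "('v \<times> 'v) set \<Rightarrow> 'v \<Rightarrow> 'v \<Rightarrow> ('v \<times> 'v) set \<Rightarrow> bool" where
  "st_cut E s t C \<longleftrightarrow> C \<subseteq> E \<and> (s, t) \<notin> (E - C)\<^sup>*"

definition normalized_fn :: "('e set \<Rightarrow> real) \<Rightarrow> bool" where
  "normalized_fn f \<longleftrightarrow> f {} = 0"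

definition monotone_fn :: "'e set \<Rightarrow> ('e set \<Rightarrow> real) \<Rightarrow> bool" where
  "monotone_fn E f \<longleftrightarrow> (\<forall>A B. A \<subseteq> B \<and> B \<subseteq> E \<longrightarrow> f A \<le> f B)"

definition submodular_fn :: "'e set \<Rightarrow> ('e set \<Rightarrow> real) \<Rightarrow> bool" where
  "submodular_fn E f \<longleftrightarrow>
     (\<forall>A B. A \<subseteq> E \<and> B \<subseteq> E \<longrightarrow> f (A \<union> B) + f (A \<inter> B) \<le> f A + f B)"

text \<open>Lovasz extension on nonnegative vectors y indexed by the ground set E:
  with the distinct positive values v_1 > ... > v_k of y on E, level sets
  B_j = {e. y e \<ge> v_j} (nested increasing) and coefficients
  lambda_j = v_j - v_(j+1) (v_(k+1) = 0), it equals the sum of lambda_j * f B_j,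
  i.e. y = sum lambda_j chi(B_j).\<close>

definition next_lower :: "'e set \<Rightarrow> ('e \<Rightarrow> real) \<Rightarrow> real \<Rightarrow> real" where
  "next_lower E y v = Max (insert 0 {w \<in> y ` E. w < v})"

definition lovasz_ext :: "'e set \<Rightarrow> ('e set \<Rightarrow> real) \<Rightarrow> ('e \<Rightarrow> real) \<Rightarrow> real" where
  "lovasz_ext E f y =
     (\<Sum>v \<in> {w \<in> y ` E. w > 0}. (v - next_lower E y v) * f {e \<in> E. y e \<ge> v})"

definition relax_feasible ::
  "'v set \<Rightarrow> ('v \<times> 'v) set \<Rightarrow> 'v \<Rightarrow> 'v \<Rightarrow> ('v \<Rightarrow> real) \<Rightarrow> (('v \<times> 'v) \<Rightarrow> real) \<Rightarrow> bool" where
  "relax_feasible V E s t x y \<longleftrightarrow>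
     (\<forall>u v. (u, v) \<in> E \<longrightarrow> - x u + x v + y (u, v) \<ge> 0) \<and>
     x s - x t \<ge> 1 \<and>
     (\<forall>e \<in> E. y e \<ge> 0)"

definition level_set :: "'v set \<Rightarrow> ('v \<Rightarrow> real) \<Rightarrow> real \<Rightarrow> 'v set" where
  "level_set V x \<theta> = {u \<in> V. x u \<ge> \<theta>}"

definition threshold_cut ::
  "'v set \<Rightarrow> ('v \<times> 'v) set \<Rightarrow> ('v \<Rightarrow> real) \<Rightarrow> real \<Rightarrow> ('v \<times> 'v) set" where
  "threshold_cut V E x \<theta> =
     {(u, v) \<in> E. u \<in> level_set V x \<theta> \<and> v \<notin> level_set V x \<theta>}"

end

theory Submission
  imports Defs "HOL-Probability.Probability_Measure"
begin

lemma telescope: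
  fixes S :: "real set"
  assumes "finite S" "\<forall>v\<in>S. 0 < v"
  shows "(\<Sum>v\<in>S. v - Max (insert 0 {w\<in>S. w < v})) = Max (insert 0 S)"
  using assms
proof (induct S rule: finite_linorder_max_induct)
  case empty
  then show ?case by simp
next
  case (insert b A)
  have bA: "b \<notin> A" using insert by auto
  have e1: "{w\<in>insert b A. w < b} = A" using insert by auto
  have e2: "\<And>v. v \<in> A \<Longrightarrow> {w\<in>insert b A. w < v} = {w\<in>A. w < v}" using insert by auto
  have "(\<Sum>v\<in>insert b A. v - Max (insert 0 {w\<in>insert b A. w < v}))
     = (b - Max (insert 0 A)) + (\<Sum>v\<in>A. v - Max (insert 0 {w\<in>A. w < v}))"
    using insert bA e1 e2 by simp
  also have "\<dots> = b" using insert by simp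
  also have "b = Max (insert 0 (insert b A))"
    using insert by (intro Max_eqI[symmetric]) auto
  finally show ?case .
qed

lemma lovasz_lower:
  fixes E :: "'e set" and f :: "'e set \<Rightarrow> real" and y :: "'e \<Rightarrow> real"
  assumes finE: "finite E" and ynn: "\<forall>e\<in>E. 0 \<le> y e"
    and nonneg: "\<forall>A \<subseteq> E. f A \<ge> 0" and mono: "monotone_fn E f"
    and d: "0 < \<delta>" and f0: "f {} = 0"
  shows "\<delta> * f {e\<in>E. y e \<ge> \<delta>} \<le> lovasz_ext E f y"
proof -
  let ?T = "{w \<in> y ` E. w > 0}"
  let ?t = "\<lambda>v. (v - next_lower E y v) * f {e \<in> E. y e \<ge> v}"
  have finT: "finite ?T" using finE by simp
  have nl_lt: "next_lower E y v < v" if "v > 0" for v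
    unfolding next_lower_def using finE that by (subst Max_less_iff) auto
  have tnn: "?t v \<ge> 0" if "v \<in> ?T" for v
    using nl_lt[of v] that nonneg by (intro mult_nonneg_nonneg) auto
  show ?thesis
  proof (cases "{w\<in>y`E. w \<ge> \<delta>} = {}")
    case True
    then have "{e\<in>E. y e \<ge> \<delta>} = {}" by auto
    have "0 \<le> lovasz_ext E f y" unfolding lovasz_ext_def using tnn by (intro sum_nonneg) auto
    then show ?thesis using \<open>{e\<in>E. y e \<ge> \<delta>} = {}\<close> f0 by (simp only:)
  next
    case False
    define m where "m = Min {w\<in>y`E. w \<ge> \<delta>}"
    have fin2: "finite {w\<in>y`E. w \<ge> \<delta>}" using finE by simp
    have m_in: "m \<in> {w\<in>y`E. w \<ge> \<delta>}" unfolding m_def using fin2 False by (rule Min_in)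
    have m_le: "\<And>w. w \<in> y`E \<Longrightarrow> w \<ge> \<delta> \<Longrightarrow> m \<le> w" unfolding m_def using fin2 by auto
    have D: "{e\<in>E. y e \<ge> \<delta>} = {e\<in>E. y e \<ge> m}"
      using m_in m_le by force
    define W where "W = {w\<in>y`E. 0 < w \<and> w \<le> m}"
    have WT: "W \<subseteq> ?T" unfolding W_def by auto
    have finW: "finite W" using finE unfolding W_def by simp
    have W_pos: "\<forall>v\<in>W. 0 < v" unfolding W_def by auto
    have nlW: "next_lower E y v = Max (insert 0 {w\<in>W. w < v})" if "v \<in> W" for v
    proof -
      have "insert 0 {w \<in> y ` E. w < v} = insert 0 {w\<in>W. w < v}"
        using that ynn unfolding W_def by force
      then show ?thesis unfolding next_lower_def by simp
    qed
    have MW: "Max (insert 0 W) = m"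
      using m_in d finW unfolding W_def by (intro Max_eqI) auto
    have tel: "(\<Sum>v\<in>W. v - next_lower E y v) = m"
      using telescope[OF finW W_pos] nlW MW by simp
    have fD: "f {e\<in>E. y e \<ge> m} \<le> f {e \<in> E. y e \<ge> v}" if "v \<in> W" for v
    proof -
      have "v \<le> m" using that unfolding W_def by auto
      then have "{e\<in>E. y e \<ge> m} \<subseteq> {e \<in> E. y e \<ge> v}" by auto
      then show ?thesis using mono unfolding monotone_fn_def by blast
    qed
    have fDnn: "0 \<le> f {e\<in>E. y e \<ge> m}" using nonneg by auto
    have "\<delta> * f {e\<in>E. y e \<ge> \<delta>} \<le> m * f {e\<in>E. y e \<ge> m}"
      using D m_in fDnn by (simp add: mult_right_mono)
    also have "\<dots> = (\<Sum>v\<in>W. (v - next_lower E y v) * f {e\<in>E. y e \<ge> m})"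
      by (subst sum_distrib_right[symmetric]) (simp only: tel)
    also have "\<dots> \<le> (\<Sum>v\<in>W. ?t v)"
      using fD nl_lt W_pos by (intro sum_mono mult_left_mono) (auto simp: less_imp_le)
    also have "\<dots> \<le> (\<Sum>v\<in>?T. ?t v)"
      using WT finT tnn by (intro sum_mono2) auto
    finally show ?thesis unfolding lovasz_ext_def .
  qed
qed

theorem lemma10:
  fixes V :: "'v set" and E :: "('v \<times> 'v) set" and s t :: 'v
    and f :: "('v \<times> 'v) set \<Rightarrow> real"
    and Cstar :: "('v \<times> 'v) set"
    and xstar :: "'v \<Rightarrow> real" and ystar :: "('v \<times> 'v) \<Rightarrow> real"
  assumes finV: "finite V"
    and EV: "E \<subseteq> V \<times> V"
    and s: "s \<in> V" and t: "t \<in> V" and st: "s \<noteq> t"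
    and nonneg: "\<forall>A \<subseteq> E. f A \<ge> 0"
    and norm: "normalized_fn f"
    and mono: "monotone_fn E f"
    and submod: "submodular_fn E f"
    and Cstar_cut: "st_cut E s t Cstar"
    and Cstar_min: "\<forall>C. st_cut E s t C \<longrightarrow> f Cstar \<le> f C"
    and feas: "relax_feasible V E s t xstar ystar"
    and opt: "\<forall>x y. relax_feasible V E s t x y \<longrightarrow>
                 lovasz_ext E f ystar \<le> lovasz_ext E f y"
    and x01: "\<forall>u \<in> V. 0 \<le> xstar u \<and> xstar u \<le> 1"
    and y01: "\<forall>e \<in> E. 0 \<le> ystar e \<and> ystar e \<le> 1"
  shows "integral\<^sup>L (uniform_measure lborel {0..1::real})
           (\<lambda>\<theta>. f (threshold_cut V E xstar \<theta>))
           \<le> (real (card V) - 1) * lovasz_ext E f ystar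
       \<and> (real (card V) - 1) * lovasz_ext E f ystar \<le> (real (card V) - 1) * f Cstar"
proof -
  have finE: "finite E" using finV EV by (meson finite_SigmaI finite_subset)
  have ynn: "\<forall>e\<in>E. 0 \<le> ystar e" using y01 by auto
  have f0: "f {} = 0" using norm unfolding normalized_fn_def .
  let ?L = "lovasz_ext E f ystar"
  have xst: "xstar s - xstar t \<ge> 1" using feas unfolding relax_feasible_def by blast
  have xs1: "xstar s = 1" and xt0: "xstar t = 0"
  proof -
    have "0 \<le> xstar t" "xstar s \<le> 1" using x01 s t by auto
    then show "xstar s = 1" "xstar t = 0" using xst by linarith+
  qed
  have edge: "ystar (u, v) \<ge> xstar u - xstar v" if "(u,v) \<in> E" for u v
    using feas that unfolding relax_feasible_def by force
  have cardV: "card V \<ge> 2"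
  proof -
    have "{s,t} \<subseteq> V" using s t by auto
    then have "card {s,t} \<le> card V" using finV by (simp add: card_mono)
    then show ?thesis using st by simp
  qed
  define x0 where "x0 u = (if (s,u) \<in> (E - Cstar)\<^sup>* then 1 else (0::real))" for u
  define y0 where "y0 e = (if e \<in> Cstar then 1 else (0::real))" for e
  have CE: "Cstar \<subseteq> E" and nst: "(s,t) \<notin> (E - Cstar)\<^sup>*" using Cstar_cut unfolding st_cut_def by auto
  have feas0: "relax_feasible V E s t x0 y0"
    unfolding relax_feasible_def
  proof (intro conjI allI impI ballI)
    fix u v assume uv: "(u,v) \<in> E"
    show "- x0 u + x0 v + y0 (u, v) \<ge> 0"
    proof (cases "(u,v) \<in> Cstar")
      case True then show ?thesis unfolding x0_def y0_def by auto
    next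
      case False
      then have "(u,v) \<in> E - Cstar" using uv by auto
      then have "(s,u) \<in> (E - Cstar)\<^sup>* \<Longrightarrow> (s,v) \<in> (E - Cstar)\<^sup>*"
        by (meson rtrancl.rtrancl_into_rtrancl)
      then show ?thesis unfolding x0_def y0_def by auto
    qed
  next
    show "x0 s - x0 t \<ge> 1" using nst unfolding x0_def by auto
  next
    fix e show "0 \<le> y0 e" unfolding y0_def by auto
  qed
  have Ly0: "lovasz_ext E f y0 = f Cstar"
  proof (cases "Cstar = {}")
    case True
    then have "{w \<in> y0 ` E. w > 0} = {}" unfolding y0_def by auto
    then show ?thesis unfolding lovasz_ext_def using True f0 by (simp only: sum.empty)
  next
    case False
    then have T: "{w \<in> y0 ` E. w > 0} = {1}" using CE unfolding y0_def by (auto simp: image_iff)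
    have i0: "insert 0 {w \<in> y0 ` E. w < 1} = {0}" unfolding y0_def by auto
    have nl: "next_lower E y0 1 = 0" unfolding next_lower_def i0 by simp
    have "{e \<in> E. y0 e \<ge> 1} = Cstar" using CE unfolding y0_def by auto
    then show ?thesis unfolding lovasz_ext_def T using nl by simp
  qed
  have part2: "?L \<le> f Cstar" using opt feas0 Ly0 by metis
  have n1: "real (card V) - 1 \<ge> 0" using cardV by simp
  define X where "X = xstar ` V"
  define P where "P = {w\<in>X. 0 < w}"
  define p where "p w = Max {z\<in>X. z < w}" for w
  define C where "C w = threshold_cut V E xstar w" for w
  define g where "g \<theta> = f (threshold_cut V E xstar \<theta>)" for \<theta>
  define h where "h \<theta> = (\<Sum>w\<in>P. f (C w) * indicator {p w<..w} \<theta>)" for \<theta>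
  define M where "M = uniform_measure lborel {0..1::real}"
  have finX: "finite X" unfolding X_def using finV by simp
  have X01: "\<And>z. z \<in> X \<Longrightarrow> 0 \<le> z \<and> z \<le> 1" unfolding X_def using x01 by auto
  have X0: "0 \<in> X" unfolding X_def using t xt0 by force
  have finP: "finite P" unfolding P_def using finX by simp
  have pP: "p w \<in> X \<and> p w < w" if "w \<in> P" for w
  proof -
    have ne: "{z\<in>X. z < w} \<noteq> {}" using X0 that unfolding P_def by auto
    have "p w \<in> {z\<in>X. z < w}" unfolding p_def using finX ne by (intro Max_in) auto
    then show ?thesis by auto
  qed
  have p_ge: "z \<le> p w" if "z \<in> X" "z < w" for z w
    unfolding p_def using finX that by (intro Max_ge) auto
  have cardP: "real (card P) \<le> real (card V) - 1"
  proof -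
    have "P \<subseteq> X - {0}" unfolding P_def by auto
    then have "card P \<le> card (X - {0})" using finX by (intro card_mono) auto
    also have "\<dots> = card X - 1" using X0 finX by simp
    also have "card X \<le> card V" unfolding X_def using finV by (rule card_image_le)
    finally show ?thesis using cardV by linarith
  qed
  have Cnn: "0 \<le> f (C w)" for w
  proof -
    have "C w \<subseteq> E" unfolding C_def threshold_cut_def by auto
    then show ?thesis using nonneg by blast
  qed
  have bound: "(w - p w) * f (C w) \<le> ?L" if "w \<in> P" for w
  proof -
    let ?d = "w - p w"
    have d: "0 < ?d" using pP[OF that] by simp
    have "C w \<subseteq> {e\<in>E. ystar e \<ge> ?d}"
    proof
      fix e assume e: "e \<in> C w"
      then obtain u v where uv: "e = (u,v)" "(u,v) \<in> E" "u \<in> V" "xstar u \<ge> w" "v \<in> V" "xstar v < w"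
        unfolding C_def threshold_cut_def level_set_def using EV by auto
      have "xstar v \<le> p w" using p_ge uv unfolding X_def by auto
      then show "e \<in> {e\<in>E. ystar e \<ge> ?d}" using edge[OF uv(2)] uv by auto
    qed
    then have "f (C w) \<le> f {e\<in>E. ystar e \<ge> ?d}" using mono unfolding monotone_fn_def by blast
    then have "?d * f (C w) \<le> ?d * f {e\<in>E. ystar e \<ge> ?d}" using d by simp
    also have "\<dots> \<le> ?L" by (rule lovasz_lower[OF finE ynn nonneg mono d f0])
    finally show ?thesis .
  qed
  have gh: "g \<theta> \<le> h \<theta>" for \<theta>
  proof (cases "0 < \<theta> \<and> \<theta> \<le> 1")
    case False
    have "threshold_cut V E xstar \<theta> = {}"
    proof (cases "\<theta> \<le> 0")
      case True
      then show ?thesis unfolding threshold_cut_def level_set_def using EV x01 by force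
    next
      case False
      then have "\<theta> > 1" using \<open>\<not> (0 < \<theta> \<and> \<theta> \<le> 1)\<close> by simp
      then show ?thesis unfolding threshold_cut_def level_set_def using EV x01 by force
    qed
    then have "g \<theta> = 0" unfolding g_def using f0 by simp
    moreover have "0 \<le> h \<theta>" unfolding h_def using Cnn by (intro sum_nonneg) auto
    ultimately show ?thesis by simp
  next
    case True
    define w where "w = Min {z\<in>X. \<theta> \<le> z}"
    have X1: "1 \<in> X" unfolding X_def using s xs1 by force
    have ne: "{z\<in>X. \<theta> \<le> z} \<noteq> {}" using X1 True by auto
    have w_in: "w \<in> X" "\<theta> \<le> w" unfolding w_def using Min_in[OF _ ne] finX by auto
    have w_le: "\<And>z. z \<in> X \<Longrightarrow> \<theta> \<le> z \<Longrightarrow> w \<le> z" unfolding w_def using finX by auto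
    have wP: "w \<in> P" using w_in True unfolding P_def by auto
    have pth: "p w < \<theta>"
    proof (rule ccontr)
      assume "\<not> p w < \<theta>"
      then have "w \<le> p w" using w_le pP[OF wP] by auto
      then show False using pP[OF wP] by simp
    qed
    have lev: "level_set V xstar \<theta> = level_set V xstar w"
      unfolding level_set_def using w_in w_le unfolding X_def by force
    have gw: "g \<theta> = f (C w)" unfolding g_def C_def threshold_cut_def lev ..
    have "f (C w) * indicator {p w<..w} \<theta> \<le> h \<theta>"
      unfolding h_def using wP finP Cnn
      by (intro member_le_sum[where f="\<lambda>w. f (C w) * indicator {p w<..w} \<theta>"]) auto
    moreover have "indicator {p w<..w} \<theta> = (1::real)" using pth w_in by auto
    ultimately show ?thesis using gw by simp
  qed
  have probM: "prob_space M" unfolding M_def by (rule prob_space_uniform_measure) auto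
  have int_ind: "integrable M (indicator {a<..b} :: real \<Rightarrow> real)" for a b
  proof (rule integrable_real_indicator)
    show "{a<..b} \<in> sets M" unfolding M_def by simp
    show "emeasure M {a<..b} < \<infinity>"
      using finite_measure.emeasure_finite[OF prob_space.finite_measure[OF probM]]
      by (simp add: less_top[symmetric])
  qed
  have meas_ind: "measure M {a<..b} = b - a" if "0 \<le> a" "a \<le> b" "b \<le> 1" for a b
  proof -
    have "{0..1} \<inter> {a<..b} = {a<..b}" using that by auto
    then show ?thesis unfolding M_def using that by simp
  qed
  have int_h: "integrable M h" unfolding h_def using int_ind by auto
  have Ih0: "integral\<^sup>L M h = (\<Sum>w\<in>P. integral\<^sup>L M (\<lambda>x. f (C w) * indicator {p w<..w} x))"
    unfolding h_def
    by (rule Bochner_Integration.integral_sum) (rule integrable_mult_right, rule int_ind)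
  have Ih: "integral\<^sup>L M h = (\<Sum>w\<in>P. f (C w) * (w - p w))"
    unfolding Ih0
  proof (rule sum.cong)
    fix w assume w: "w \<in> P"
    have "measure M {p w<..w} = w - p w"
      using pP[OF w] X01[of "p w"] X01[of w] w unfolding P_def by (intro meas_ind) auto
    then show "integral\<^sup>L M (\<lambda>x. f (C w) * indicator {p w<..w} x) = f (C w) * (w - p w)"
      by (simp add: M_def)
  qed simp
  have Lnn: "0 \<le> ?L"
  proof -
    have "1 * f {e\<in>E. ystar e \<ge> 1} \<le> ?L" by (rule lovasz_lower[OF finE ynn nonneg mono _ f0]) simp
    moreover have "0 \<le> f {e\<in>E. ystar e \<ge> 1}" using nonneg by simp
    ultimately show ?thesis by linarith
  qed
  have "integral\<^sup>L M g \<le> (real (card V) - 1) * ?L"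
  proof (cases "integrable M g")
    case True
    have "integral\<^sup>L M g \<le> integral\<^sup>L M h" using True int_h gh by (intro integral_mono) auto
    also have "\<dots> \<le> (\<Sum>w\<in>P. ?L)" unfolding Ih using bound by (intro sum_mono) (simp add: mult.commute)
    also have "\<dots> = real (card P) * ?L" by simp
    also have "\<dots> \<le> (real (card V) - 1) * ?L" using cardP Lnn by (intro mult_right_mono)
    finally show ?thesis .
  next
    case False
    then have "integral\<^sup>L M g = 0" by (rule not_integrable_integral_eq)
    then show ?thesis using n1 Lnn by simp
  qed
  then show ?thesis unfolding M_def g_def using part2 n1 by (simp add: mult_left_mono)
qed

end
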